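(* Let $n\ge2$ be an integer and write $n-1=\sum_{i=0}^m p_i2^i$ with $p_i\in\{0,1\}$ and $p_m=1$; let $I=\{i\mid p_i=1\}$. In the standard MV-algebra $[0,1]_{\text{Ł}}$, the system of equations $y_0=\neg x$, $y_j=y_{j-1}^2$ for $j=1,\dots,m$, and $x=\prod_{i\in I}y_i$ has a unique solution, and in it $x=1/n$.
   Context: Standard MV-algebra $[0,1]_{\text{Ł}}$: domain $[0,1]$, $x\cdot y=\max(0,x+y-1)$, $\neg x=1-x$. Powers $y^2=y\cdot y$ and the product $\prod$ refer to the operation $\cdot$. *)

theory Defs
  imports Main "HOL.Real"
begin

definition luk_mult :: "real \<Rightarrow> real \<Rightarrow> real" where
  "luk_mult x y = max 0 (x + y - 1)"

definition luk_neg :: "real \<Rightarrow> real" where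
  "luk_neg x = 1 - x"

definition luk_prod :: "(nat \<Rightarrow> real) \<Rightarrow> nat list \<Rightarrow> real" where
  "luk_prod f is = foldr (\<lambda>i a. luk_mult (f i) a) is 1"

definition luk_system :: "nat \<Rightarrow> (nat \<Rightarrow> nat) \<Rightarrow> real \<times> real list \<Rightarrow> bool" where
  "luk_system m p s = (let x = fst s; y = snd s in
     length y = m + 1 \<and> x \<in> {0..1} \<and> (\<forall>j\<le>m. y ! j \<in> {0..1}) \<and>
     y ! 0 = luk_neg x \<and>
     (\<forall>j. 1 \<le> j \<and> j \<le> m \<longrightarrow> y ! j = luk_mult (y ! (j - 1)) (y ! (j - 1))) \<and>
     x = luk_prod (\<lambda>i. y ! i) (filter (\<lambda>i. p i = 1) [0..<m+1]))"

end

theory Submission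
  imports Defs
begin

definition YY :: "real \<Rightarrow> nat \<Rightarrow> real" where
  "YY x j = max 0 (1 - 2 ^ j * x)"

lemma sys_y:
  assumes "luk_system m p (x, y)"
  shows "j \<le> m \<Longrightarrow> y ! j = YY x j"
proof (induction j)
  case 0
  then show ?case using assms by (simp add: luk_system_def luk_neg_def YY_def)
next
  case (Suc j)
  have x0: "x \<ge> 0" using assms by (simp add: luk_system_def)
  have "y ! Suc j = luk_mult (y ! j) (y ! j)" using assms Suc.prems
    by (auto simp: luk_system_def)
  also have "\<dots> = luk_mult (YY x j) (YY x j)" using Suc by simp
  also have "\<dots> = YY x (Suc j)"
  proof -
    have "(2::real) ^ j * x \<ge> 0" using x0 by simp
    then show ?thesis unfolding luk_mult_def YY_def by (auto simp: max_def)
  qed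
  finally show ?case .
qed

lemma prod_YY:
  assumes "x \<ge> 0" "\<forall>i\<in>set xs. f i = YY x i"
  shows "luk_prod f xs = max 0 (1 - real (sum_list (map (\<lambda>i. 2 ^ i) xs)) * x)"
  using assms(2)
proof (induction xs)
  case Nil
  then show ?case by (simp add: luk_prod_def)
next
  case (Cons a xs)
  have IH: "luk_prod f xs = max 0 (1 - real (sum_list (map (\<lambda>i. 2 ^ i) xs)) * x)"
    using Cons by simp
  have fa: "f a = YY x a" using Cons.prems by simp
  have "luk_prod f (a # xs) = luk_mult (f a) (luk_prod f xs)"
    by (simp add: luk_prod_def)
  also have "\<dots> = luk_mult (max 0 (1 - 2^a * x)) (max 0 (1 - real (sum_list (map (\<lambda>i. 2 ^ i) xs)) * x))"
    using fa IH by (simp add: YY_def)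
  also have "\<dots> = max 0 (1 - real (sum_list (map (\<lambda>i. 2 ^ i) (a # xs))) * x)"
  proof -
    have h1: "(2::real)^a * x \<ge> 0" using assms(1) by simp
    have h2: "real (sum_list (map (\<lambda>i. 2 ^ i) xs)) * x \<ge> 0" using assms(1) by simp
    show ?thesis using h1 h2 unfolding luk_mult_def
      by (auto simp: max_def algebra_simps)
  qed
  finally show ?case .
qed

lemma sum_filter:
  assumes "\<forall>i\<le>m. p i \<in> {0, 1}"
  shows "sum_list (map (\<lambda>i. (2::nat) ^ i) (filter (\<lambda>i. p i = 1) [0..<m+1])) = (\<Sum>i\<le>m. p i * 2 ^ i)"
proof -
  have "sum_list (map (\<lambda>i. (2::nat) ^ i) (filter (\<lambda>i. p i = 1) [0..<m+1]))
      = sum (\<lambda>i. 2 ^ i) {i \<in> {..m}. p i = 1}"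
  proof -
    have "set (filter (\<lambda>i. p i = 1) [0..<m+1]) = {i \<in> {..m}. p i = 1}" by (simp only: set_filter set_upt) fastforce
    then show ?thesis by (simp add: sum_list_distinct_conv_sum_set del: upt_Suc)
  qed
  also have "\<dots> = (\<Sum>i\<le>m. if p i = 1 then 2 ^ i else 0)"
    using sum.inter_filter[of "{..m}" "\<lambda>i. (2::nat) ^ i" "\<lambda>i. p i = 1"] by simp
  also have "\<dots> = (\<Sum>i\<le>m. p i * 2 ^ i)"
    using assms by (intro sum.cong) auto
  finally show ?thesis .
qed

theorem lemma4p1:
  fixes n m :: nat and p :: "nat \<Rightarrow> nat"
  assumes "n \<ge> 2"
    and "\<forall>i\<le>m. p i \<in> {0, 1}"
    and "p m = 1"
    and "n - 1 = (\<Sum>i\<le>m. p i * 2 ^ i)"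
  shows "(\<exists>!s. luk_system m p s) \<and> (\<forall>s. luk_system m p s \<longrightarrow> fst s = 1 / real n)"
proof -
  let ?L = "filter (\<lambda>i. p i = 1) [0..<m+1]"
  have S: "sum_list (map (\<lambda>i. (2::nat) ^ i) ?L) = n - 1"
    using sum_filter[OF assms(2)] assms(4) by simp
  have rn: "real (n - 1) = real n - 1" using assms(1) by simp
  have sol: "fst s = 1 / real n" if h: "luk_system m p s" for s
  proof -
    obtain x y where s: "s = (x, y)" by (cases s)
    have hs: "luk_system m p (x, y)" using h s by simp
    have x0: "x \<ge> 0" using hs by (simp add: luk_system_def)
    have "x = luk_prod (\<lambda>i. y ! i) ?L" using hs by (simp add: luk_system_def Let_def)
    also have "\<dots> = max 0 (1 - real (sum_list (map (\<lambda>i. 2 ^ i) ?L)) * x)"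
      by (rule prod_YY[OF x0]) (auto intro: sys_y[OF hs])
    also have "\<dots> = max 0 (1 - (real n - 1) * x)" using S rn by simp
    finally have e: "x = max 0 (1 - (real n - 1) * x)" .
    have "x \<noteq> 0" using e by auto
    hence "x = 1 - (real n - 1) * x" using e by (auto simp: max_def split: if_splits)
    hence "real n * x = 1" by (simp add: algebra_simps)
    hence "x = 1 / real n" using assms(1) by (simp add: field_simps)
    then show ?thesis using s by simp
  qed
  define x0 where "x0 = 1 / real n"
  define y0 where "y0 = map (YY x0) [0..<m+1]"
  have x0p: "x0 \<ge> 0" "x0 \<le> 1" using assms(1) by (auto simp: x0_def)
  have ex: "luk_system m p (x0, y0)"
  proof -
    have len: "length y0 = m + 1" by (simp add: y0_def)
    have yj: "\<And>j. j \<le> m \<Longrightarrow> y0 ! j = YY x0 j"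
      by (simp add: y0_def nth_append del: upt_Suc)
    have "luk_prod (\<lambda>i. y0 ! i) ?L = max 0 (1 - real (sum_list (map (\<lambda>i. 2 ^ i) ?L)) * x0)"
      by (rule prod_YY[OF x0p(1)]) (auto intro: yj)
    also have "\<dots> = max 0 (1 - (real n - 1) * x0)" using S rn by simp
    also have "\<dots> = x0" using assms(1) by (simp add: x0_def field_simps)
    finally have P: "x0 = luk_prod (\<lambda>i. y0 ! i) ?L" by simp
    have rng: "\<forall>j\<le>m. y0 ! j \<in> {0..1}" using yj x0p by (auto simp: YY_def)
    have y00: "y0 ! 0 = luk_neg x0" using yj[of 0] x0p by (simp add: YY_def luk_neg_def)
    have rec: "\<forall>j. 1 \<le> j \<and> j \<le> m \<longrightarrow> y0 ! j = luk_mult (y0 ! (j - 1)) (y0 ! (j - 1))"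
    proof (intro allI impI)
      fix j assume j: "1 \<le> j \<and> j \<le> m"
      then obtain k where k: "j = Suc k" by (cases j) auto
      have "(2::real)^k * x0 \<ge> 0" using x0p by simp
      then show "y0 ! j = luk_mult (y0 ! (j - 1)) (y0 ! (j - 1))"
        using j k yj[of j] yj[of k] unfolding luk_mult_def YY_def by (auto simp: max_def)
    qed
    show ?thesis unfolding luk_system_def Let_def fst_conv snd_conv
      using len x0p rng y00 rec P by auto
  qed
  have uniq: "s = (x0, y0)" if h: "luk_system m p s" for s
  proof -
    obtain x y where s: "s = (x, y)" by (cases s)
    have hs: "luk_system m p (x, y)" using h s by simp
    have xx: "x = x0" using sol[OF h] s x0_def by simp
    have "y = y0"
    proof (rule nth_equalityI)
      show "length y = length y0" using hs by (simp add: luk_system_def y0_def)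
      fix i assume "i < length y"
      hence i: "i \<le> m" using hs by (simp add: luk_system_def)
      show "y ! i = y0 ! i" using sys_y[OF hs i] xx i
        by (simp add: y0_def nth_append del: upt_Suc)
    qed
    then show ?thesis using s xx by simp
  qed
  show ?thesis using ex uniq sol by blast
qed

end
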